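(* Let $z_0=((x^i)_0,(p^B)_0,(p^B_i)_0)\in\tilde U$ and assume that $S_{u}$ is the jet-graph through $z_0$ of an approximate solution $u=(u^A)$ at $x_0$ to the system $u^A_\alpha=F^A_\alpha(x^i,u^B,u^B_\Gamma)$. Then $T_{z_0}S_u$ is an integral element of $\mathcal{I}$. If $E\subset T_{z_0}S_u$ is a linear subspace, then $T_{z_0}S_u\subset H(E)$.
   Context: Let $1\le k<n$, $m\ge1$; indices $i,j\in\{1,\dots,n\}$, $\Lambda,\Gamma\in\{1,\dots,k\}$, $\alpha\in\{k+1,\dots,n\}$, $A,B\in\{1,\dots,m\}$, repeated upper/lower indices summed; $u^A_i=\partial u^A/\partial x^i$. Let $F^A_\alpha(x^i,p^B,p^B_\Lambda)$ be real-analytic on an open $U\subset\mathbb{R}^n\times\mathbb{R}^m\times\mathbb{R}^{mk}$, and $\tilde U:=U\times\mathbb{R}^{(n-k)m}$ with coordinates $z=(x^i,p^A,p^A_i)$. $\mathcal{I}$ is the exterior differential system on $\tilde U$ generated by the functions $f^A_\alpha:=p^A_\alpha-F^A_\alpha(x^i,p^B,p^B_\Gamma)$ and 1-forms $\eta^A:=dp^A-p^A_idx^i$ (algebraically generated by $f^A_\alpha$, $df^A_\alpha$, $\eta^A$, $dp^A_i\wedge dx^i$). An integral element of $\mathcal{I}$ at $z$ is a linear subspace $E\subset T_z\mathbb{R}^{n+m+nm}$ on which every $p$-form of $\mathcal{I}$ vanishes (functions vanishing at $z$); for an $l$-dimensional integral element with basis $e_1,\dots,e_l$, $H(E):=\{v:\phi(v,e_1,\dots,e_l)=0$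 for all $(l+1)$-forms $\phi\in\mathcal{I}\}$. The jet-graph of $u$ is $S_u=\{(x^i,u^B(x^i),u^B_j(x^i))\}$. A real-analytic $u$ near $x_0$ is an approximate solution at $x_0$ to the system if $u^A_\alpha-F^A_\alpha(x^i,u^B,u^B_\Gamma)=O(\sum_i|x^i-x_0^i|^2)$. *)

theory Defs
  imports "HOL-Analysis.Analysis" "HOL-Combinatorics.Permutations"
begin

text \<open>Real analyticity of a real-valued function on a Euclidean space:
  locally the sum of an (unconditionally, i.e. absolutely) convergent
  multivariate power series.\<close>
definition real_analytic_on :: "('e::euclidean_space \<Rightarrow> real) \<Rightarrow> 'e set \<Rightarrow> bool" where
  "real_analytic_on f S \<longleftrightarrow>
     (\<forall>y\<in>S. \<exists>c :: ('e \<Rightarrow> nat) \<Rightarrow> real. \<exists>r>0. \<forall>w\<in>ball y r.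
        ((\<lambda>\<alpha>. c \<alpha> * (\<Prod>b\<in>Basis. ((w - y) \<bullet> b) ^ (\<alpha> b))) has_sum f w)
          {\<alpha>. \<forall>b. b \<notin> Basis \<longrightarrow> \<alpha> b = 0})"

text \<open>Indices: i ranges over 'k + 'a (Inl \<Lambda> for \<Lambda> = 1..k, Inr \<alpha> for \<alpha> = k+1..n),
  A, B range over 'm.  A point z = (x^i, p^A, p^A_i) of the jet space.\<close>
type_synonym ('k, 'a, 'm) jet = "(real^('k + 'a)) \<times> (real^'m) \<times> (real^('k + 'a)^'m)"

text \<open>Arguments (x^i, p^B, p^B_\<Gamma>) of F.\<close>
type_synonym ('k, 'a, 'm) farg = "(real^('k + 'a)) \<times> (real^'m) \<times> (real^'k^'m)"

definition restrP :: "real^('k::finite + 'a::finite)^'m \<Rightarrow> real^'k^'m" where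
  "restrP P = (\<chi> B. \<chi> \<Gamma>. P $ B $ Inl \<Gamma>)"

definition Utilde :: "('k::finite, 'a::finite, 'm::finite) farg set \<Rightarrow> ('k, 'a, 'm) jet set" where
  "Utilde U = {(x, p, P). (x, p, restrP P) \<in> U}"

text \<open>A p-form field on the jet space: (degree, z \<mapsto> (v_1..v_p) \<mapsto> value).\<close>
type_synonym 'v form = "nat \<times> ('v \<Rightarrow> 'v list \<Rightarrow> real)"

definition is_form :: "nat \<Rightarrow> ('v::real_vector \<Rightarrow> 'v list \<Rightarrow> real) \<Rightarrow> bool" where
  "is_form p \<gamma> \<longleftrightarrow> (\<forall>z.
     (\<forall>vs j a b u w. length vs = p \<and> j < p \<longrightarrow>
        \<gamma> z (vs[j := a *\<^sub>R u + b *\<^sub>R w]) = a * \<gamma> z (vs[j := u]) + b * \<gamma> z (vs[j := w])) \<and>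
     (\<forall>vs j l. length vs = p \<and> j < l \<and> l < p \<and> vs ! j = vs ! l \<longrightarrow> \<gamma> z vs = 0))"

definition wedge :: "nat \<Rightarrow> nat \<Rightarrow> ('v \<Rightarrow> 'v list \<Rightarrow> real) \<Rightarrow> ('v \<Rightarrow> 'v list \<Rightarrow> real)
                      \<Rightarrow> ('v \<Rightarrow> 'v list \<Rightarrow> real)" where
  "wedge p q \<alpha> \<beta> = (\<lambda>z vs.
     (\<Sum>\<sigma> | \<sigma> permutes {..<p+q}.
        of_int (sign \<sigma>) * \<alpha> z (map (\<lambda>j. vs ! \<sigma> j) [0..<p])
                        * \<beta> z (map (\<lambda>j. vs ! \<sigma> (p + j)) [0..<q]))
     / (fact p * fact q))"

inductive_set alg_ideal :: "'v::real_vector form set \<Rightarrow> 'v form set" for G where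
  gen: "\<phi> \<in> G \<Longrightarrow> \<phi> \<in> alg_ideal G"
| wedge_left: "(p, \<omega>) \<in> alg_ideal G \<Longrightarrow> is_form q \<gamma> \<Longrightarrow> (q + p, wedge q p \<gamma> \<omega>) \<in> alg_ideal G"
| add: "(p, \<omega>1) \<in> alg_ideal G \<Longrightarrow> (p, \<omega>2) \<in> alg_ideal G \<Longrightarrow>
        (p, \<lambda>z vs. \<omega>1 z vs + \<omega>2 z vs) \<in> alg_ideal G"

definition fgen :: "('m \<Rightarrow> 'a \<Rightarrow> ('k, 'a, 'm) farg \<Rightarrow> real) \<Rightarrow> 'm \<Rightarrow> 'a
                     \<Rightarrow> ('k::finite, 'a::finite, 'm::finite) jet \<Rightarrow> real" where
  "fgen F A \<alpha> z = snd (snd z) $ A $ Inr \<alpha> - F A \<alpha> (fst z, fst (snd z), restrP (snd (snd z)))"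

text \<open>The exterior differential system \<I> on \<tilde>U, given by its algebraic generators
  f^A_\<alpha>, df^A_\<alpha>, \<eta>^A = dp^A - p^A_i dx^i, dp^A_i \<and> dx^i.\<close>
definition EDS_gens :: "('m \<Rightarrow> 'a \<Rightarrow> ('k, 'a, 'm) farg \<Rightarrow> real)
                        \<Rightarrow> ('k::finite, 'a::finite, 'm::finite) jet form set" where
  "EDS_gens F =
     {(0, \<lambda>z vs. fgen F A \<alpha> z) | A \<alpha>. True}
   \<union> {(1, \<lambda>z vs. frechet_derivative (fgen F A \<alpha>) (at z) (hd vs)) | A \<alpha>. True}
   \<union> {(1, \<lambda>z vs. fst (snd (hd vs)) $ A - (\<Sum>i\<in>UNIV. snd (snd z) $ A $ i * fst (hd vs) $ i)) | A. True}
   \<union> {(2, \<lambda>z vs. (\<Sum>i\<in>UNIV. snd (snd (vs ! 0)) $ A $ i * fst (vs ! 1) $ i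
                          - snd (snd (vs ! 1)) $ A $ i * fst (vs ! 0) $ i)) | A. True}"

definition EDS :: "('m \<Rightarrow> 'a \<Rightarrow> ('k, 'a, 'm) farg \<Rightarrow> real)
                   \<Rightarrow> ('k::finite, 'a::finite, 'm::finite) jet form set" where
  "EDS F = alg_ideal (EDS_gens F)"

definition integral_element :: "'v::real_vector form set \<Rightarrow> 'v \<Rightarrow> 'v set \<Rightarrow> bool" where
  "integral_element I z E \<longleftrightarrow> subspace E \<and>
     (\<forall>p \<phi>. (p, \<phi>) \<in> I \<longrightarrow> (\<forall>vs. length vs = p \<and> set vs \<subseteq> E \<longrightarrow> \<phi> z vs = 0))"

text \<open>H(E) computed with respect to a basis es = [e_1,..,e_l] of E.\<close>
definition Hpolar :: "'v::real_vector form set \<Rightarrow> 'v \<Rightarrow> 'v list \<Rightarrow> 'v set" where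
  "Hpolar I z es = {v. \<forall>\<phi>. (Suc (length es), \<phi>) \<in> I \<longrightarrow> \<phi> z (v # es) = 0}"

definition jet :: "(real^('k + 'a) \<Rightarrow> real^'m) \<Rightarrow> real^('k::finite + 'a::finite)
                   \<Rightarrow> ('k, 'a, 'm::finite) jet" where
  "jet u x = (x, u x, \<chi> A. \<chi> i. frechet_derivative u (at x) (axis i 1) $ A)"

definition jet_graph :: "(real^('k + 'a) \<Rightarrow> real^'m) \<Rightarrow> ('k::finite, 'a::finite, 'm::finite) jet set" where
  "jet_graph u = range (jet u)"

definition tangent_jet :: "(real^('k + 'a) \<Rightarrow> real^'m) \<Rightarrow> real^('k::finite + 'a::finite)
                           \<Rightarrow> ('k, 'a, 'm::finite) jet set" where
  "tangent_jet u x0 = range (frechet_derivative (jet u) (at x0))"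

definition approx_solution :: "('m \<Rightarrow> 'a \<Rightarrow> ('k, 'a, 'm) farg \<Rightarrow> real) \<Rightarrow> ('k, 'a, 'm) farg set
     \<Rightarrow> (real^('k + 'a) \<Rightarrow> real^'m) \<Rightarrow> real^('k::finite + 'a::finite) \<Rightarrow> bool" where
  "approx_solution F U u x0 \<longleftrightarrow>
     (\<exists>S. open S \<and> x0 \<in> S \<and> (\<forall>A::'m::finite. real_analytic_on (\<lambda>x. u x $ A) S)) \<and>
     (\<exists>C \<delta>. \<delta> > 0 \<and> (\<forall>x\<in>ball x0 \<delta>.
        (x, u x, restrP (snd (snd (jet u x)))) \<in> U \<and>
        (\<forall>A \<alpha>. \<bar>snd (snd (jet u x)) $ A $ Inr \<alpha> - F A \<alpha> (x, u x, restrP (snd (snd (jet u x))))\<bar>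
                \<le> C * (\<Sum>i\<in>UNIV. \<bar>x $ i - x0 $ i\<bar> ^ 2))))"

end

theory Submission
  imports Defs
begin

definition ms :: "('e \<Rightarrow> nat) \<Rightarrow> 'e::euclidean_space \<Rightarrow> real" where
  "ms \<beta> h = (\<Prod>b\<in>Basis. (h \<bullet> b) ^ (\<beta> b))"
definition deg :: "('e::euclidean_space \<Rightarrow> nat) \<Rightarrow> nat" where
  "deg \<beta> = (\<Sum>b\<in>Basis. \<beta> b)"
definition dl :: "'e \<Rightarrow> 'e \<Rightarrow> nat" where "dl b = (\<lambda>c. if c = b then 1 else 0)"

lemma ms_remove:
  assumes "b \<in> (Basis::'e::euclidean_space set)"
  shows "ms (\<beta> - dl b) h = (h \<bullet> b) ^ (\<beta> b - 1) * (\<Prod>c\<in>Basis - {b}. (h \<bullet> c) ^ \<beta> c)"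
proof -
  have "ms (\<beta> - dl b) h = (h \<bullet> b) ^ ((\<beta> - dl b) b) * (\<Prod>c\<in>Basis - {b}. (h \<bullet> c) ^ ((\<beta> - dl b) c))"
    unfolding ms_def using assms by (simp add: prod.remove)
  also have "(\<Prod>c\<in>Basis - {b}. (h \<bullet> c) ^ ((\<beta> - dl b) c)) = (\<Prod>c\<in>Basis - {b}. (h \<bullet> c) ^ \<beta> c)"
    by (rule prod.cong) (auto simp: dl_def)
  finally show ?thesis by (simp add: dl_def fun_diff_def)
qed

lemma ms_deriv:
  "(ms \<beta> has_derivative (\<lambda>v. \<Sum>b\<in>Basis. (v \<bullet> b) * (real (\<beta> b) * ms (\<beta> - dl b) h))) (at h)"
proof -
  have "((\<lambda>h. \<Prod>b\<in>Basis. (h \<bullet> b) ^ (\<beta> b)) has_derivative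
     (\<lambda>v. \<Sum>b\<in>Basis. (of_nat (\<beta> b) * (v \<bullet> b) * (h \<bullet> b) ^ (\<beta> b - 1)) * (\<Prod>c\<in>Basis - {b}. (h \<bullet> c) ^ (\<beta> c)))) (at h)"
    by (intro has_derivative_prod has_derivative_power bounded_linear.has_derivative[OF bounded_linear_inner_left] has_derivative_ident)
  moreover have "(\<lambda>v. \<Sum>b\<in>Basis. (of_nat (\<beta> b) * (v \<bullet> b) * (h \<bullet> b) ^ (\<beta> b - 1)) * (\<Prod>c\<in>Basis - {b}. (h \<bullet> c) ^ (\<beta> c)))
     = (\<lambda>v. \<Sum>b\<in>Basis. (v \<bullet> b) * (real (\<beta> b) * ms (\<beta> - dl b) h))"
    by (intro ext sum.cong refl) (simp add: ms_remove)
  ultimately show ?thesis unfolding ms_def[abs_def] by simp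
qed

lemma ms_bound:
  assumes "\<And>b. b \<in> Basis \<Longrightarrow> \<bar>h \<bullet> b\<bar> \<le> \<rho>"
  shows "\<bar>ms \<beta> h\<bar> \<le> \<rho> ^ deg \<beta>"
proof -
  have "\<bar>ms \<beta> h\<bar> = (\<Prod>b\<in>Basis. \<bar>h \<bullet> b\<bar> ^ \<beta> b)" by (simp add: ms_def abs_prod power_abs)
  also have "\<dots> \<le> (\<Prod>b\<in>Basis. \<rho> ^ \<beta> b)"
    by (intro prod_mono) (auto intro: power_mono assms)
  also have "\<dots> = \<rho> ^ deg \<beta>" by (simp add: deg_def power_sum)
  finally show ?thesis .
qed

lemma deg_minus:
  assumes "b \<in> (Basis::'e::euclidean_space set)" "\<beta> b \<ge> 1"
  shows "deg (\<beta> - dl b) = deg \<beta> - 1"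
proof -
  have "deg (\<beta> - dl b) = (\<beta> b - 1) + (\<Sum>c\<in>Basis - {b}. \<beta> c)"
  proof -
    have "deg (\<beta> - dl b) = (\<beta> - dl b) b + (\<Sum>c\<in>Basis - {b}. (\<beta> - dl b) c)"
      unfolding deg_def using assms by (simp add: sum.remove)
    also have "(\<Sum>c\<in>Basis - {b}. (\<beta> - dl b) c) = (\<Sum>c\<in>Basis - {b}. \<beta> c)"
      by (rule sum.cong) (auto simp: dl_def)
    finally show ?thesis by (simp add: dl_def fun_diff_def)
  qed
  moreover have "deg \<beta> = \<beta> b + (\<Sum>c\<in>Basis - {b}. \<beta> c)"
    unfolding deg_def using assms by (simp add: sum.remove)
  ultimately show ?thesis using assms by simp
qed

lemma le_deg: "b \<in> Basis \<Longrightarrow> \<beta> b \<le> deg \<beta>"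
  unfolding deg_def by (rule member_le_sum) auto

lemma term_bound:
  assumes "b \<in> (Basis::'e::euclidean_space set)" "0 \<le> \<rho>"
  shows "real (\<beta> b) * \<rho> ^ deg (\<beta> - dl b) \<le> real (deg \<beta>) * \<rho> ^ (deg \<beta> - 1)"
proof (cases "\<beta> b = 0")
  case True then show ?thesis using assms by simp
next
  case False
  then have "deg (\<beta> - dl b) = deg \<beta> - 1" using deg_minus[OF assms(1)] by simp
  then show ?thesis using le_deg[OF assms(1), of \<beta>] assms
    by (simp add: mult_right_mono)
qed

lemma ms_d_bound:
  assumes "b \<in> (Basis::'e::euclidean_space set)" "\<And>c. c \<in> Basis \<Longrightarrow> \<bar>h \<bullet> c\<bar> \<le> \<rho>"
  shows "\<bar>real (\<beta> b) * ms (\<beta> - dl b) h\<bar> \<le> real (deg \<beta>) * \<rho> ^ (deg \<beta> - 1)"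
proof -
  have r: "0 \<le> \<rho>" using assms(2)[OF assms(1)] by linarith
  have "\<bar>real (\<beta> b) * ms (\<beta> - dl b) h\<bar> \<le> real (\<beta> b) * \<rho> ^ deg (\<beta> - dl b)"
    by (simp add: abs_mult mult_left_mono ms_bound assms)
  also have "\<dots> \<le> real (deg \<beta>) * \<rho> ^ (deg \<beta> - 1)" by (rule term_bound[OF assms(1) r])
  finally show ?thesis .
qed

lemma ms_deriv_bound:
  assumes "\<And>c. c \<in> Basis \<Longrightarrow> \<bar>(h::'e::euclidean_space) \<bullet> c\<bar> \<le> \<rho>"
  shows "\<bar>\<Sum>b\<in>Basis. (v \<bullet> b) * (real (\<beta> b) * ms (\<beta> - dl b) h)\<bar> \<le> real DIM('e) * real (deg \<beta>) * \<rho> ^ (deg \<beta> - 1) * norm v"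
proof -
  have "\<bar>\<Sum>b\<in>Basis. (v \<bullet> b) * (real (\<beta> b) * ms (\<beta> - dl b) h)\<bar> \<le> (\<Sum>b\<in>(Basis::'e set). \<bar>(v \<bullet> b) * (real (\<beta> b) * ms (\<beta> - dl b) h)\<bar>)"
    by (rule sum_abs)
  also have "\<dots> \<le> (\<Sum>b\<in>(Basis::'e set). norm v * (real (deg \<beta>) * \<rho> ^ (deg \<beta> - 1)))"
  proof (rule sum_mono)
    fix b :: 'e assume b: "b \<in> Basis"
    show "\<bar>(v \<bullet> b) * (real (\<beta> b) * ms (\<beta> - dl b) h)\<bar> \<le> norm v * (real (deg \<beta>) * \<rho> ^ (deg \<beta> - 1))"
      unfolding abs_mult[of "v \<bullet> b"]
      by (intro mult_mono Basis_le_norm[OF b] ms_d_bound[OF b assms] ) (auto simp: b)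
  qed
  also have "\<dots> = real DIM('e) * real (deg \<beta>) * \<rho> ^ (deg \<beta> - 1) * norm v" by simp
  finally show ?thesis .
qed

lemma series_deriv:
  fixes T :: "nat \<Rightarrow> 'a::real_normed_vector \<Rightarrow> real"
  assumes S: "convex S" "open S"
    and der: "\<And>n x. x \<in> S \<Longrightarrow> (T n has_derivative T' n x) (at x)"
    and bnd: "\<And>n x v. x \<in> S \<Longrightarrow> \<bar>T' n x v\<bar> \<le> B n * norm v"
    and B0: "\<And>n. 0 \<le> B n"
    and sB: "summable B"
    and sT: "\<And>x. x \<in> S \<Longrightarrow> summable (\<lambda>n. T n x)"
    and x: "x \<in> S"
  shows "((\<lambda>x. \<Sum>n. T n x) has_derivative (\<lambda>v. \<Sum>n. T' n x v)) (at x)"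
proof -
  have sT': "summable (\<lambda>n. T' n x v)" if "x \<in> S" for x v
    by (rule summable_comparison_test'[where g="\<lambda>n. B n * norm v"])
       (use bnd[OF that] sB in \<open>auto intro: summable_mult2\<close>)
  have "\<exists>g. \<forall>x\<in>S. (\<lambda>n. T n x) sums (g x) \<and> (g has_derivative (\<lambda>v. \<Sum>n. T' n x v)) (at x within S)"
  proof (rule has_derivative_series[OF S(1) _ _ x])
    show "((T n) has_derivative (T' n x)) (at x within S)" if "x \<in> S" for n x
      using der[OF that] by (rule has_derivative_at_withinI)
    show "(\<lambda>n. T n x) sums (\<Sum>n. T n x)" using sT[OF x] by (rule summable_sums)
    fix e :: real assume e: "e > 0"
    obtain N where N: "\<And>n. n \<ge> N \<Longrightarrow> norm (\<Sum>i. B (i + n)) < e"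
      using suminf_exist_split[OF e sB] by blast
    show "\<forall>\<^sub>F n in sequentially. \<forall>x\<in>S. \<forall>h. norm ((\<Sum>i<n. T' i x h) - (\<Sum>n. T' n x h)) \<le> e * norm h"
      unfolding eventually_sequentially
    proof (intro exI allI impI ballI)
      fix n x h assume n: "N \<le> n" and xS: "x \<in> S"
      have "(\<Sum>i<n. T' i x h) - (\<Sum>n. T' n x h) = - (\<Sum>i. T' (i + n) x h)"
        using suminf_minus_initial_segment[OF sT'[OF xS], of n] by simp
      then have "norm ((\<Sum>i<n. T' i x h) - (\<Sum>n. T' n x h)) = \<bar>\<Sum>i. T' (i + n) x h\<bar>" by simp
      also have "\<dots> \<le> (\<Sum>i. B (i + n) * norm h)"
      proof -
        have s1: "summable (\<lambda>i. B (i + n) * norm h)"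
          using summable_ignore_initial_segment[OF sB, of n] by (rule summable_mult2)
        have "\<bar>\<Sum>i. T' (i + n) x h\<bar> \<le> (\<Sum>i. \<bar>T' (i + n) x h\<bar>)"
          by (rule summable_rabs) (rule summable_comparison_test'[OF s1], use bnd[OF xS] in auto)
        also have "\<dots> \<le> (\<Sum>i. B (i + n) * norm h)"
          by (rule suminf_le) (use bnd[OF xS] s1 in \<open>auto intro: summable_comparison_test'[OF s1]\<close>)
        finally show ?thesis .
      qed
      also have "\<dots> = (\<Sum>i. B (i + n)) * norm h"
        using summable_ignore_initial_segment[OF sB, of n] by (simp add: suminf_mult2)
      also have "\<dots> \<le> e * norm h"
        using N[OF n] by (intro mult_right_mono) auto
      finally show "norm ((\<Sum>i<n. T' i x h) - (\<Sum>n. T' n x h)) \<le> e * norm h" .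
    qed
  qed
  then obtain g where g: "\<And>x. x \<in> S \<Longrightarrow> (\<lambda>n. T n x) sums (g x)"
    "\<And>x. x \<in> S \<Longrightarrow> (g has_derivative (\<lambda>v. \<Sum>n. T' n x v)) (at x within S)" by blast
  have "(g has_derivative (\<lambda>v. \<Sum>n. T' n x v)) (at x)"
    using g(2)[OF x] at_within_open[OF x S(2)] by simp
  then show ?thesis
    by (rule has_derivative_transform_within_open[OF _ S(2) x]) (use g(1) sums_unique in auto)
qed

lemma ball_coord: "x \<in> ball y \<rho> \<Longrightarrow> c \<in> Basis \<Longrightarrow> \<bar>(x - y) \<bullet> c\<bar> \<le> \<rho>"
  by (metis Basis_le_norm dist_norm dist_commute less_eq_real_def mem_ball order_trans)

lemma ps_deriv:
  fixes d :: "nat \<Rightarrow> real" and \<kappa> :: "nat \<Rightarrow> 'e::euclidean_space \<Rightarrow> nat"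
  assumes r: "0 < \<rho>"
    and s1: "summable (\<lambda>n. \<bar>d n\<bar> * \<rho> ^ deg (\<kappa> n))"
    and s2: "summable (\<lambda>n. \<bar>d n\<bar> * real (deg (\<kappa> n)) * \<rho> ^ (deg (\<kappa> n) - 1))"
    and x: "x \<in> ball y \<rho>"
  shows "((\<lambda>x. \<Sum>n. d n * ms (\<kappa> n) (x - y)) has_derivative
          (\<lambda>v. \<Sum>b\<in>Basis. (v \<bullet> b) * (\<Sum>n. d n * real (\<kappa> n b) * ms (\<kappa> n - dl b) (x - y)))) (at x)"
proof -
  define T where "T n x = d n * ms (\<kappa> n) (x - y)" for n x
  define T' where "T' n x v = d n * (\<Sum>b\<in>Basis. (v \<bullet> b) * (real (\<kappa> n b) * ms (\<kappa> n - dl b) (x - y)))" for n x v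
  define B where "B n = real DIM('e) * (\<bar>d n\<bar> * real (deg (\<kappa> n)) * \<rho> ^ (deg (\<kappa> n) - 1))" for n
  have sb: "summable (\<lambda>n. d n * real (\<kappa> n b) * ms (\<kappa> n - dl b) (x - y))" if b: "b \<in> Basis" for b
  proof (rule summable_comparison_test'[OF s2])
    fix n
    have "\<bar>real (\<kappa> n b) * ms (\<kappa> n - dl b) (x - y)\<bar> \<le> real (deg (\<kappa> n)) * \<rho> ^ (deg (\<kappa> n) - 1)"
      by (rule ms_d_bound[OF b]) (rule ball_coord[OF x])
    then show "norm (d n * real (\<kappa> n b) * ms (\<kappa> n - dl b) (x - y)) \<le> \<bar>d n\<bar> * real (deg (\<kappa> n)) * \<rho> ^ (deg (\<kappa> n) - 1)"
      by (simp add: abs_mult mult.assoc mult_left_mono)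
  qed
  have "((\<lambda>x. \<Sum>n. T n x) has_derivative (\<lambda>v. \<Sum>n. T' n x v)) (at x)"
  proof (rule series_deriv[where S="ball y \<rho>" and B=B])
    show "(T n has_derivative T' n z) (at z)" if "z \<in> ball y \<rho>" for n z
      unfolding T_def[abs_def] T'_def
      by (intro has_derivative_mult_right has_derivative_compose[OF _ ms_deriv, of "\<lambda>x. x - y", unfolded o_def])
         (auto intro!: derivative_eq_intros)
  next
    fix n z v assume z: "z \<in> ball y \<rho>"
    have "\<bar>T' n z v\<bar> = \<bar>d n\<bar> * \<bar>\<Sum>b\<in>Basis. (v \<bullet> b) * (real (\<kappa> n b) * ms (\<kappa> n - dl b) (z - y))\<bar>"
      by (simp add: T'_def abs_mult)
    also have "\<dots> \<le> \<bar>d n\<bar> * (real DIM('e) * real (deg (\<kappa> n)) * \<rho> ^ (deg (\<kappa> n) - 1) * norm v)"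
      by (intro mult_left_mono ms_deriv_bound) (auto intro: ball_coord[OF z])
    also have "\<dots> = B n * norm v" by (simp add: B_def)
    finally show "\<bar>T' n z v\<bar> \<le> B n * norm v" .
  next
    show "0 \<le> B n" for n using r by (simp add: B_def)
    show "summable B" unfolding B_def by (rule summable_mult[OF s2])
    show "summable (\<lambda>n. T n z)" if z: "z \<in> ball y \<rho>" for z
    proof (rule summable_comparison_test'[OF s1])
      fix n show "norm (T n z) \<le> \<bar>d n\<bar> * \<rho> ^ deg (\<kappa> n)"
        unfolding T_def using ms_bound[OF ball_coord[OF z]]
        by (simp add: abs_mult mult_left_mono)
    qed
  qed (use x in auto)
  moreover have "(\<lambda>v. \<Sum>n. T' n x v) = (\<lambda>v. \<Sum>b\<in>Basis. (v \<bullet> b) * (\<Sum>n. d n * real (\<kappa> n b) * ms (\<kappa> n - dl b) (x - y)))"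
  proof
    fix v
    have "(\<Sum>n. T' n x v) = (\<Sum>n. \<Sum>b\<in>Basis. (v \<bullet> b) * (d n * real (\<kappa> n b) * ms (\<kappa> n - dl b) (x - y)))"
      unfolding T'_def by (simp add: sum_distrib_left mult_ac)
    also have "\<dots> = (\<Sum>b\<in>Basis. \<Sum>n. (v \<bullet> b) * (d n * real (\<kappa> n b) * ms (\<kappa> n - dl b) (x - y)))"
      by (rule suminf_sum) (auto intro: summable_mult sb)
    also have "\<dots> = (\<Sum>b\<in>Basis. (v \<bullet> b) * (\<Sum>n. d n * real (\<kappa> n b) * ms (\<kappa> n - dl b) (x - y)))"
      by (intro sum.cong refl) (simp add: suminf_mult sb)
    finally show "(\<Sum>n. T' n x v) = \<dots>" .
  qed
  ultimately show ?thesis unfolding T_def by simp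
qed

definition idx :: "('e::euclidean_space \<Rightarrow> nat) set" where
  "idx = {\<alpha>. \<forall>b. b \<notin> Basis \<longrightarrow> \<alpha> b = 0}"

lemma idx_countable: "countable (idx :: ('e::euclidean_space \<Rightarrow> nat) set)"
proof -
  have "idx \<subseteq> (\<lambda>f b. if b \<in> Basis then f b else 0) ` (PiE (Basis::'e set) (\<lambda>_. UNIV::nat set))"
  proof
    fix \<alpha> :: "'e \<Rightarrow> nat" assume a: "\<alpha> \<in> idx"
    have "\<alpha> = (\<lambda>b. if b \<in> Basis then restrict \<alpha> Basis b else 0)"
      using a by (auto simp: idx_def)
    moreover have "restrict \<alpha> Basis \<in> PiE Basis (\<lambda>_. UNIV)" by simp
    ultimately show "\<alpha> \<in> (\<lambda>f b. if b \<in> Basis then f b else 0) ` (PiE (Basis::'e set) (\<lambda>_. UNIV::nat set))"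
      by blast
  qed
  moreover have "countable (PiE (Basis::'e set) (\<lambda>_. UNIV::nat set))"
    by (rule countable_PiE) auto
  ultimately show ?thesis by (meson countable_image countable_subset)
qed

lemma idx_infinite: "infinite (idx :: ('e::euclidean_space \<Rightarrow> nat) set)"
proof
  assume fin: "finite (idx :: ('e \<Rightarrow> nat) set)"
  obtain b0 :: 'e where b0: "b0 \<in> Basis" using nonempty_Basis by blast
  define h where "h k = (\<lambda>c. if c = b0 then k else (0::nat))" for k
  have "inj h" unfolding h_def inj_def by (metis (full_types))
  moreover have "range h \<subseteq> idx" using b0 by (auto simp: h_def idx_def)
  ultimately show False using fin range_inj_infinite finite_subset by blast
qed

lemma deg_minus_le: "deg (\<beta> - dl b) \<le> deg \<beta>"
  unfolding deg_def by (rule sum_mono) (simp add: fun_diff_def)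

lemma pw: "0 < \<rho> \<Longrightarrow> \<rho> \<le> 1 \<Longrightarrow> (\<rho>::real) ^ (j - 1) \<le> \<rho> ^ j / \<rho>"
  by (cases j) (auto simp: field_simps)

lemma kpow: assumes "0 < \<rho>" "4 * \<rho> \<le> \<rho>'"
  shows "real k ^ 2 * \<rho> ^ k \<le> \<rho>' ^ k" "real k * \<rho> ^ k \<le> \<rho>' ^ k"
proof -
  have "real k \<le> 2 ^ k" using less_exp[of k] by (metis less_imp_le of_nat_le_iff of_nat_numeral of_nat_power)
  then have "real k ^ 2 \<le> (2 ^ k) ^ 2" by (intro power_mono) auto
  also have "\<dots> = (2 ^ 2) ^ k" by (metis power_mult mult.commute)
  also have "\<dots> = 4 ^ k" by simp
  finally have a: "real k ^ 2 \<le> 4 ^ k" .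
  have "real k ^ 2 * \<rho> ^ k \<le> 4 ^ k * \<rho> ^ k" using a assms by (intro mult_right_mono) auto
  also have "\<dots> = (4 * \<rho>) ^ k" by (simp add: power_mult_distrib)
  also have "\<dots> \<le> \<rho>' ^ k" using assms by (intro power_mono) auto
  finally show 1: "real k ^ 2 * \<rho> ^ k \<le> \<rho>' ^ k" .
  have "real k \<le> real k ^ 2" by (cases k) (auto simp: power2_eq_square)
  then have "real k * \<rho> ^ k \<le> real k ^ 2 * \<rho> ^ k" using assms by (intro mult_right_mono) auto
  then show "real k * \<rho> ^ k \<le> \<rho>' ^ k" using 1 by linarith
qed

lemma analytic_C2:
  fixes f :: "'e::euclidean_space \<Rightarrow> real"
  assumes an: "real_analytic_on f S" and y: "y \<in> S"
  shows "\<exists>\<rho>>0. \<exists>Q K. (\<forall>x\<in>ball y \<rho>. (f has_derivative (\<lambda>v. \<Sum>b\<in>Basis. (v \<bullet> b) * Q b x)) (at x)) \<and>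
           (\<forall>b\<in>Basis. (Q b has_derivative (\<lambda>v. \<Sum>a\<in>Basis. (v \<bullet> a) * K b a)) (at y)) \<and>
           (\<forall>a\<in>Basis. \<forall>b\<in>Basis. K a b = K b a)"
proof -
  obtain c :: "('e \<Rightarrow> nat) \<Rightarrow> real" and r where r: "r > 0" and
    hs: "\<And>w. w \<in> ball y r \<Longrightarrow> ((\<lambda>\<alpha>. c \<alpha> * ms \<alpha> (w - y)) has_sum f w) idx"
    using an y unfolding real_analytic_on_def ms_def[abs_def] idx_def by blast
  define g where "g = from_nat_into (idx :: ('e \<Rightarrow> nat) set)"
  have bij: "bij_betw g UNIV idx"
    unfolding g_def by (rule bij_betw_from_nat_into[OF idx_countable idx_infinite])
  have hsn: "((\<lambda>n. c (g n) * ms (g n) (w - y)) has_sum f w) UNIV" if "w \<in> ball y r" for w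
    using hs[OF that] has_sum_reindex_bij_betw[OF bij, of "\<lambda>\<alpha>. c \<alpha> * ms \<alpha> (w - y)"] by simp
  define \<rho>' where "\<rho>' = r / (2 * real DIM('e))"
  have r': "\<rho>' > 0" using r by (simp add: \<rho>'_def)
  define hh where "hh = (\<Sum>b\<in>(Basis::'e set). \<rho>' *\<^sub>R b)"
  have hhb: "hh \<bullet> b = \<rho>'" if "b \<in> Basis" for b
  proof -
    have "hh \<bullet> b = (\<Sum>c\<in>(Basis::'e set). \<rho>' * (c \<bullet> b))" by (simp add: hh_def inner_sum_left)
    also have "\<dots> = (\<Sum>c\<in>(Basis::'e set). if c = b then \<rho>' else 0)"
      by (rule sum.cong) (auto simp: inner_Basis that)
    also have "\<dots> = \<rho>'" using that by simp
    finally show ?thesis .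
  qed
  have "norm hh \<le> (\<Sum>b\<in>(Basis::'e set). norm (\<rho>' *\<^sub>R b))" unfolding hh_def by (rule norm_sum)
  also have "\<dots> = real DIM('e) * \<rho>'" using r' by simp
  also have "\<dots> < r" using r by (simp add: \<rho>'_def)
  finally have "y + hh \<in> ball y r" by (simp add: dist_norm)
  from hsn[OF this] have "((\<lambda>n. c (g n) * \<rho>' ^ deg (g n)) has_sum f (y + hh)) UNIV"
    by (simp add: ms_def hhb deg_def power_sum)
  then have "(\<lambda>n. c (g n) * \<rho>' ^ deg (g n)) summable_on UNIV" by (rule has_sum_imp_summable)
  then have "(\<lambda>n. norm (c (g n) * \<rho>' ^ deg (g n))) summable_on UNIV"
    by (rule summable_on_iff_abs_summable_on_real[THEN iffD1])
  then have "summable (\<lambda>n. norm (c (g n) * \<rho>' ^ deg (g n)))"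
    by (rule summable_on_imp_summable)
  moreover have "norm (c (g n) * \<rho>' ^ deg (g n)) = \<bar>c (g n)\<bar> * \<rho>' ^ deg (g n)" for n
    using r' by (simp add: abs_mult)
  ultimately have sW: "summable (\<lambda>n. \<bar>c (g n)\<bar> * \<rho>' ^ deg (g n))" by simp
  define W where "W n = \<bar>c (g n)\<bar> * \<rho>' ^ deg (g n)" for n
  define \<rho> where "\<rho> = min (\<rho>' / 4) (1/2)"
  have \<rho>: "0 < \<rho>" "\<rho> \<le> 1" "4 * \<rho> \<le> \<rho>'" "\<rho> \<le> \<rho>'" using r' by (auto simp: \<rho>_def)
  have "\<rho>' \<le> r / 2" unfolding \<rho>'_def using r
    by (intro divide_left_mono) (auto simp: DIM_positive)
  then have \<rho>r: "\<rho> < r" using \<rho> r' by (simp add: \<rho>_def min_def)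
  have W0: "0 \<le> W n" for n using r' by (simp add: W_def)
  have A1: "\<bar>c (g n)\<bar> * \<rho> ^ deg (g n) \<le> W n" for n
    unfolding W_def by (intro mult_left_mono power_mono) (use \<rho> in auto)
  have A2: "\<bar>c (g n)\<bar> * real (deg (g n)) * \<rho> ^ (deg (g n) - 1) \<le> W n / \<rho>" for n
  proof -
    have "real (deg (g n)) * \<rho> ^ (deg (g n) - 1) \<le> real (deg (g n)) * (\<rho> ^ deg (g n) / \<rho>)"
      by (intro mult_left_mono pw) (use \<rho> in auto)
    also have "\<dots> \<le> \<rho>' ^ deg (g n) / \<rho>"
      using kpow(2)[OF \<rho>(1,3), of "deg (g n)"] \<rho> by (simp add: divide_right_mono)
    finally show ?thesis unfolding W_def
      by (simp add: mult.assoc) (metis abs_ge_zero mult_left_mono times_divide_eq_right)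
  qed
  have A3: "\<bar>c (g n) * real (g n b)\<bar> * \<rho> ^ deg (g n - dl b) \<le> W n / \<rho>" if b: "b \<in> Basis" for n b
  proof -
    have "\<bar>c (g n) * real (g n b)\<bar> * \<rho> ^ deg (g n - dl b) = \<bar>c (g n)\<bar> * (real (g n b) * \<rho> ^ deg (g n - dl b))"
      by (simp add: abs_mult)
    also have "\<dots> \<le> \<bar>c (g n)\<bar> * (real (deg (g n)) * \<rho> ^ (deg (g n) - 1))"
      by (intro mult_left_mono term_bound b) (use \<rho> in auto)
    also have "\<dots> \<le> W n / \<rho>" using A2[of n] by (simp add: mult.assoc)
    finally show ?thesis .
  qed
  have A4: "\<bar>c (g n) * real (g n b)\<bar> * real (deg (g n - dl b)) * \<rho> ^ (deg (g n - dl b) - 1) \<le> W n / \<rho> ^ 2"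
    if b: "b \<in> Basis" for n b
  proof -
    let ?k = "deg (g n)" and ?j = "deg (g n - dl b)"
    have "\<bar>c (g n) * real (g n b)\<bar> * real ?j * \<rho> ^ (?j - 1) \<le> \<bar>c (g n)\<bar> * real (g n b) * real ?k * (\<rho> ^ ?j / \<rho>)"
    proof -
      have "real ?j * \<rho> ^ (?j - 1) \<le> real ?k * (\<rho> ^ ?j / \<rho>)"
        using deg_minus_le[of "g n" b] pw[OF \<rho>(1,2), of ?j] \<rho>
        by (intro mult_mono) auto
      then have "\<bar>c (g n)\<bar> * real (g n b) * (real ?j * \<rho> ^ (?j - 1)) \<le> \<bar>c (g n)\<bar> * real (g n b) * (real ?k * (\<rho> ^ ?j / \<rho>))"
        by (intro mult_left_mono) auto
      then show ?thesis by (simp add: abs_mult mult.assoc)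
    qed
    also have "\<dots> = \<bar>c (g n)\<bar> * real ?k * (real (g n b) * \<rho> ^ ?j) / \<rho>" by simp
    also have "\<dots> \<le> \<bar>c (g n)\<bar> * real ?k * (real ?k * (\<rho> ^ ?k / \<rho>)) / \<rho>"
    proof -
      have "real (g n b) * \<rho> ^ ?j \<le> real ?k * \<rho> ^ (?k - 1)" by (rule term_bound[OF b]) (use \<rho> in auto)
      also have "\<dots> \<le> real ?k * (\<rho> ^ ?k / \<rho>)" by (intro mult_left_mono pw) (use \<rho> in auto)
      finally show ?thesis using \<rho> by (intro divide_right_mono mult_left_mono) auto
    qed
    also have "\<dots> = \<bar>c (g n)\<bar> * (real ?k ^ 2 * \<rho> ^ ?k) / \<rho> ^ 2" by (simp add: power2_eq_square)
    also have "\<dots> \<le> \<bar>c (g n)\<bar> * \<rho>' ^ ?k / \<rho> ^ 2"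
      using kpow(1)[OF \<rho>(1,3), of ?k] \<rho> by (intro divide_right_mono mult_left_mono) auto
    finally show ?thesis by (simp add: W_def)
  qed
  have sW': "summable W" using sW by (simp add: W_def[abs_def])
  have sWd: "summable (\<lambda>n. W n / z)" for z by (rule summable_divide[OF sW'])
  define Q where "Q b x = (\<Sum>n. c (g n) * real (g n b) * ms (g n - dl b) (x - y))" for b x
  have L1: "((\<lambda>x. \<Sum>n. c (g n) * ms (g n) (x - y)) has_derivative (\<lambda>v. \<Sum>b\<in>Basis. (v \<bullet> b) * Q b x)) (at x)"
    if x: "x \<in> ball y \<rho>" for x
    unfolding Q_def
  proof (rule ps_deriv[OF \<rho>(1) _ _ x])
    show "summable (\<lambda>n. \<bar>c (g n)\<bar> * \<rho> ^ deg (g n))"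
      by (rule summable_comparison_test'[OF sW']) (use A1 \<rho> in \<open>auto simp: abs_mult\<close>)
    show "summable (\<lambda>n. \<bar>c (g n)\<bar> * real (deg (g n)) * \<rho> ^ (deg (g n) - 1))"
      by (rule summable_comparison_test'[OF sWd[of \<rho>]]) (use A2 \<rho> in \<open>auto simp: abs_mult\<close>)
  qed
  have fx: "f x = (\<Sum>n. c (g n) * ms (g n) (x - y))" if "x \<in> ball y \<rho>" for x
  proof -
    have "x \<in> ball y r" using that \<rho>r by auto
    then show ?thesis using hsn has_sum_imp_sums sums_unique by blast
  qed
  have D1: "\<forall>x\<in>ball y \<rho>. (f has_derivative (\<lambda>v. \<Sum>b\<in>Basis. (v \<bullet> b) * Q b x)) (at x)"
  proof
    fix x assume x: "x \<in> ball y \<rho>"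
    show "(f has_derivative (\<lambda>v. \<Sum>b\<in>Basis. (v \<bullet> b) * Q b x)) (at x)"
      by (rule has_derivative_transform_within_open[OF L1[OF x] open_ball x]) (use fx in auto)
  qed
  define K where "K b a = (\<Sum>n. c (g n) * real (g n b) * real ((g n - dl b) a) * ms (g n - dl b - dl a) 0)" for b a
  have D2: "\<forall>b\<in>Basis. (Q b has_derivative (\<lambda>v. \<Sum>a\<in>Basis. (v \<bullet> a) * K b a)) (at y)"
  proof
    fix b :: 'e assume b: "b \<in> Basis"
    have "((\<lambda>x. \<Sum>n. (c (g n) * real (g n b)) * ms (g n - dl b) (x - y)) has_derivative
       (\<lambda>v. \<Sum>a\<in>Basis. (v \<bullet> a) * (\<Sum>n. (c (g n) * real (g n b)) * real ((g n - dl b) a) * ms (g n - dl b - dl a) (y - y)))) (at y)"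
    proof (rule ps_deriv[OF \<rho>(1)])
      show "summable (\<lambda>n. \<bar>c (g n) * real (g n b)\<bar> * \<rho> ^ deg (g n - dl b))"
        by (rule summable_comparison_test'[OF sWd[of \<rho>]]) (use A3[OF b] \<rho> in \<open>auto simp: abs_mult\<close>)
      show "summable (\<lambda>n. \<bar>c (g n) * real (g n b)\<bar> * real (deg (g n - dl b)) * \<rho> ^ (deg (g n - dl b) - 1))"
        by (rule summable_comparison_test'[OF sWd[of "\<rho>^2"]]) (use A4[OF b] \<rho> in \<open>auto simp: abs_mult\<close>)
    qed (use \<rho> in auto)
    then show "(Q b has_derivative (\<lambda>v. \<Sum>a\<in>Basis. (v \<bullet> a) * K b a)) (at y)"
      unfolding Q_def[abs_def] K_def by simp
  qed
  have D3: "\<forall>a\<in>Basis. \<forall>b\<in>Basis. K a b = K b a"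
  proof (intro ballI)
    fix a b :: 'e
    have "real (\<alpha> a) * real ((\<alpha> - dl a) b) = real (\<alpha> b) * real ((\<alpha> - dl b) a) \<and> \<alpha> - dl a - dl b = \<alpha> - dl b - dl a"
      for \<alpha> :: "'e \<Rightarrow> nat"
      by (cases "a = b") (auto simp: dl_def fun_diff_def fun_eq_iff)
    then show "K a b = K b a" unfolding K_def by (simp add: mult.assoc)
  qed
  show ?thesis using D1 D2 D3 \<rho>(1) by blast
qed


lemma vec_deriv:
  fixes f :: "'a::real_normed_vector \<Rightarrow> 'b::euclidean_space ^ 'n::finite"
  assumes "\<And>i. ((\<lambda>x. f x $ i) has_derivative (\<lambda>v. f' v $ i)) (at x within S)"
  shows "(f has_derivative f') (at x within S)"
proof (rule has_derivative_componentwise_within[THEN iffD2], rule ballI)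
  fix b :: "'b ^ 'n" assume "b \<in> Basis"
  then obtain i u where b: "b = axis i u" "u \<in> Basis" unfolding Basis_vec_def by blast
  have "((\<lambda>x. f x $ i \<bullet> u) has_derivative (\<lambda>v. f' v $ i \<bullet> u)) (at x within S)"
    using has_derivative_componentwise_within[THEN iffD1, OF assms[of i]] b(2) by blast
  then show "((\<lambda>x. f x \<bullet> b) has_derivative (\<lambda>x. f' x \<bullet> b)) (at x within S)"
    unfolding b(1) inner_axis .
qed

lemma sum_Basis_delta:
  assumes "e \<in> (Basis::'e::euclidean_space set)"
  shows "(\<Sum>b\<in>Basis. (e \<bullet> b) * F b) = F e"
proof -
  have "(\<Sum>b\<in>Basis. (e \<bullet> b) * F b) = (\<Sum>b\<in>Basis. if b = e then F b else 0)"
    by (rule sum.cong) (auto simp: inner_Basis assms)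
  then show ?thesis using assms by simp
qed

lemma sum_Basis_vec:
  fixes F :: "real ^ 'n::finite \<Rightarrow> real"
  shows "(\<Sum>b\<in>Basis. F b) = (\<Sum>i\<in>UNIV. F (axis i 1))"
proof -
  have B: "(Basis :: (real^'n) set) = (\<lambda>i. axis i 1) ` UNIV" by (auto simp: Basis_vec_def)
  have "inj (\<lambda>i::'n. axis i (1::real))" by (auto simp: inj_def axis_eq_axis)
  then show ?thesis unfolding B by (simp add: sum.reindex)
qed

lemma inner_axis1: "(w :: real ^ 'n::finite) \<bullet> axis i 1 = w $ i"
  by (simp add: inner_axis)

lemma small_deriv:
  fixes \<phi> :: "'a::real_normed_vector \<Rightarrow> real"
  assumes d: "\<delta> > 0" and b: "\<And>x. x \<in> ball x0 \<delta> \<Longrightarrow> \<bar>\<phi> x\<bar> \<le> C * norm (x - x0) ^ 2"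
  shows "(\<phi> has_derivative (\<lambda>_. 0)) (at x0)"
  unfolding has_derivative_at_alt
proof (intro conjI allI impI)
  show "bounded_linear (\<lambda>_. 0::real)" by simp
  have p0: "\<phi> x0 = 0" using b[of x0] d by simp
  fix e :: real assume e: "e > 0"
  define d' where "d' = min \<delta> (e / (\<bar>C\<bar> + 1))"
  have d': "d' > 0" using d e by (simp add: d'_def)
  show "\<exists>d>0. \<forall>y. norm (y - x0) < d \<longrightarrow> norm (\<phi> y - \<phi> x0 - 0) \<le> e * norm (y - x0)"
  proof (intro exI[of _ d'] conjI allI impI d')
    fix y assume y: "norm (y - x0) < d'"
    then have yb: "y \<in> ball x0 \<delta>" by (simp add: d'_def dist_norm norm_minus_commute)
    have "\<bar>C\<bar> * norm (y - x0) \<le> \<bar>C\<bar> * (e / (\<bar>C\<bar> + 1))"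
      using y by (intro mult_left_mono) (auto simp: d'_def)
    also have "\<dots> \<le> e" using e by (simp add: field_simps)
    finally have c: "\<bar>C\<bar> * norm (y - x0) \<le> e" .
    have "norm (\<phi> y - \<phi> x0 - 0) \<le> C * norm (y - x0) ^ 2" using b[OF yb] p0 by simp
    also have "\<dots> \<le> \<bar>C\<bar> * norm (y - x0) ^ 2" by (intro mult_right_mono) auto
    also have "\<dots> = \<bar>C\<bar> * norm (y - x0) * norm (y - x0)" by (simp add: power2_eq_square)
    also have "\<dots> \<le> e * norm (y - x0)" using c by (intro mult_right_mono) auto
    finally show "norm (\<phi> y - \<phi> x0 - 0) \<le> e * norm (y - x0)" .
  qed
qed

lemma ideal_vanish0:
  assumes "x \<in> alg_ideal G"
    and gen: "\<And>q \<psi> vs. (q, \<psi>) \<in> G \<Longrightarrow> length vs = q \<Longrightarrow> set vs \<subseteq> E \<Longrightarrow> \<psi> z vs = 0"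
  shows "length vs = fst x \<Longrightarrow> set vs \<subseteq> E \<Longrightarrow> snd x z vs = 0"
  using assms(1)
proof (induction arbitrary: vs rule: alg_ideal.induct)
  case (gen \<phi>)
  obtain q \<psi> where qp: "\<phi> = (q, \<psi>)" by (cases \<phi>)
  have "\<psi> z vs = 0"
    by (rule assms(2)) (use gen.hyps gen.prems qp in simp_all)
  then show ?case using qp by simp
next
  case (wedge_left p \<omega> q \<gamma>)
  have "\<omega> z (map (\<lambda>j. vs ! \<sigma> (q + j)) [0..<p]) = 0" if \<sigma>: "\<sigma> permutes {..<q + p}" for \<sigma>
  proof -
    have "set (map (\<lambda>j. vs ! \<sigma> (q + j)) [0..<p]) \<subseteq> E"
    proof
      fix w assume "w \<in> set (map (\<lambda>j. vs ! \<sigma> (q + j)) [0..<p])"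
      then obtain j where j: "j < p" "w = vs ! \<sigma> (q + j)" by auto
      have "\<sigma> (q + j) \<in> {..<q + p}" using permutes_in_image[OF \<sigma>] j by auto
      then have "w \<in> set vs" using j wedge_left.prems(1) by auto
      then show "w \<in> E" using wedge_left.prems(2) by auto
    qed
    moreover have "length (map (\<lambda>j. vs ! \<sigma> (q + j)) [0..<p]) = fst (p, \<omega>)" by simp
    ultimately have "snd (p, \<omega>) z (map (\<lambda>j. vs ! \<sigma> (q + j)) [0..<p]) = 0"
      by (intro wedge_left.IH)
    then show ?thesis by simp
  qed
  then have "(\<Sum>\<sigma> | \<sigma> permutes {..<q+p}.
        of_int (sign \<sigma>) * \<gamma> z (map (\<lambda>j. vs ! \<sigma> j) [0..<q])
                        * \<omega> z (map (\<lambda>j. vs ! \<sigma> (q + j)) [0..<p])) = 0"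
    by (intro sum.neutral ballI) simp
  then show ?case by (simp only: wedge_def snd_conv)
next
  case (add p \<omega>1 \<omega>2) then show ?case by simp
qed

lemma ideal_vanish:
  assumes "(p, \<phi>) \<in> alg_ideal G"
    and gen: "\<And>q \<psi> vs. (q, \<psi>) \<in> G \<Longrightarrow> length vs = q \<Longrightarrow> set vs \<subseteq> E \<Longrightarrow> \<psi> z vs = 0"
  shows "length vs = p \<Longrightarrow> set vs \<subseteq> E \<Longrightarrow> \<phi> z vs = 0"
proof -
  assume l: "length vs = p" and s: "set vs \<subseteq> E"
  have "snd (p, \<phi>) z vs = 0"
  proof (rule ideal_vanish0[where E=E and x="(p, \<phi>)" and G=G and z=z])
    show "(p, \<phi>) \<in> alg_ideal G" by (fact assms(1))
    show "\<And>q \<psi> vs. (q, \<psi>) \<in> G \<Longrightarrow> length vs = q \<Longrightarrow> set vs \<subseteq> E \<Longrightarrow> \<psi> z vs = 0" by (fact gen)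
    show "length vs = fst (p, \<phi>)" using l by simp
    show "set vs \<subseteq> E" by (fact s)
  qed
  then show ?thesis by simp
qed


lemma restrP_bl: "bounded_linear (restrP :: real^('k::finite + 'a::finite)^'m::finite \<Rightarrow> real^'k^'m)"
proof -
  have "linear (restrP :: real^('k + 'a)^'m \<Rightarrow> real^'k^'m)"
    by (rule linearI) (simp_all add: restrP_def vec_eq_iff)
  then show ?thesis by (simp add: linear_conv_bounded_linear)
qed

lemma norm_sq_vec: "norm (x :: real^'n::finite) ^ 2 = (\<Sum>i\<in>UNIV. \<bar>x $ i\<bar> ^ 2)"
  by (simp add: norm_vec_def L2_set_def sum_nonneg)

lemma fgen_deriv:
  fixes F :: "'m::finite \<Rightarrow> 'a::finite \<Rightarrow> ('k::finite, 'a, 'm) farg \<Rightarrow> real"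
  assumes "(F A \<alpha> has_derivative LF) (at (fst z, fst (snd z), restrP (snd (snd z))))"
  shows "(fgen F A \<alpha> has_derivative (\<lambda>h. snd (snd h) $ A $ Inr \<alpha> - LF (fst h, fst (snd h), restrP (snd (snd h))))) (at z)"
proof -
  define Lm where "Lm h = (fst h, fst (snd h), restrP (snd (snd h)))" for h :: "('k, 'a, 'm) jet"
  have blm: "bounded_linear Lm" unfolding Lm_def
    by (intro bounded_linear_Pair bounded_linear_fst bounded_linear_compose[OF bounded_linear_fst bounded_linear_snd]
        bounded_linear_compose[OF restrP_bl] bounded_linear_compose[OF bounded_linear_snd bounded_linear_snd])
  have d1: "(Lm has_derivative Lm) (at z)" by (rule bounded_linear_imp_has_derivative[OF blm])
  have d2: "((F A \<alpha>) \<circ> Lm has_derivative LF \<circ> Lm) (at z)"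
    by (rule diff_chain_at[OF d1]) (use assms in \<open>simp add: Lm_def\<close>)
  have bl3: "bounded_linear (\<lambda>h :: ('k, 'a, 'm) jet. snd (snd h) $ A $ Inr \<alpha>)"
    by (intro bounded_linear_compose[OF bounded_linear_vec_nth] bounded_linear_compose[OF bounded_linear_snd bounded_linear_snd])
  have d3: "((\<lambda>h :: ('k, 'a, 'm) jet. snd (snd h) $ A $ Inr \<alpha>) has_derivative (\<lambda>h. snd (snd h) $ A $ Inr \<alpha>)) (at z)"
    by (rule bounded_linear_imp_has_derivative[OF bl3])
  have "((\<lambda>h. snd (snd h) $ A $ Inr \<alpha> - ((F A \<alpha>) \<circ> Lm) h) has_derivative (\<lambda>h. snd (snd h) $ A $ Inr \<alpha> - (LF \<circ> Lm) h)) (at z)"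
    by (rule has_derivative_diff[OF d3 d2])
  then show ?thesis unfolding fgen_def[abs_def] Lm_def o_def by simp
qed

theorem proposition5p4:
  fixes F :: "'m::finite \<Rightarrow> 'a::finite \<Rightarrow> ('k::finite, 'a, 'm) farg \<Rightarrow> real"
    and U :: "('k, 'a, 'm) farg set"
    and u :: "real^('k + 'a) \<Rightarrow> real^'m"
    and x0 :: "real^('k + 'a)"
    and z0 :: "('k, 'a, 'm) jet"
  assumes "open U"
    and "\<forall>A \<alpha>. real_analytic_on (F A \<alpha>) U"
    and "z0 \<in> Utilde U"
    and "approx_solution F U u x0"
    and "jet u x0 = z0"
  shows "integral_element (EDS F) z0 (tangent_jet u x0) \<and>
         (\<forall>E es. subspace E \<and> E \<subseteq> tangent_jet u x0 \<and>
                 distinct es \<and> independent (set es) \<and> span (set es) = E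
             \<longrightarrow> tangent_jet u x0 \<subseteq> Hpolar (EDS F) z0 es)"
proof -
  from assms(4) obtain S C \<delta> where S: "open S" "x0 \<in> S" "\<And>A. real_analytic_on (\<lambda>x. u x $ A) S"
    and \<delta>: "\<delta> > 0"
    and ap: "\<And>x A \<alpha>. x \<in> ball x0 \<delta> \<Longrightarrow> \<bar>snd (snd (jet u x)) $ A $ Inr \<alpha> - F A \<alpha> (x, u x, restrP (snd (snd (jet u x))))\<bar>
                \<le> C * (\<Sum>i\<in>UNIV. \<bar>x $ i - x0 $ i\<bar> ^ 2)"
    unfolding approx_solution_def by blast
  have "\<forall>A. \<exists>\<rho> Q K. \<rho> > 0 \<and> (\<forall>x\<in>ball x0 \<rho>. ((\<lambda>x. u x $ A) has_derivative (\<lambda>v. \<Sum>b\<in>Basis. (v \<bullet> b) * Q b x)) (at x)) \<and>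
           (\<forall>b\<in>Basis. (Q b has_derivative (\<lambda>v. \<Sum>a\<in>Basis. (v \<bullet> a) * K b a)) (at x0)) \<and>
           (\<forall>a\<in>Basis. \<forall>b\<in>Basis. K a b = K b a)"
    using analytic_C2[OF S(3) S(2)] by blast
  then obtain \<rho>A where "\<forall>A. \<exists>Q K. \<rho>A A > 0 \<and> (\<forall>x\<in>ball x0 (\<rho>A A). ((\<lambda>x. u x $ A) has_derivative (\<lambda>v. \<Sum>b\<in>Basis. (v \<bullet> b) * Q b x)) (at x)) \<and>
           (\<forall>b\<in>Basis. (Q b has_derivative (\<lambda>v. \<Sum>a\<in>Basis. (v \<bullet> a) * K b a)) (at x0)) \<and>
           (\<forall>a\<in>Basis. \<forall>b\<in>Basis. K a b = K b a)" by (rule choice[THEN exE]) 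
  then obtain QA where "\<forall>A. \<exists>K. \<rho>A A > 0 \<and> (\<forall>x\<in>ball x0 (\<rho>A A). ((\<lambda>x. u x $ A) has_derivative (\<lambda>v. \<Sum>b\<in>Basis. (v \<bullet> b) * QA A b x)) (at x)) \<and>
           (\<forall>b\<in>Basis. (QA A b has_derivative (\<lambda>v. \<Sum>a\<in>Basis. (v \<bullet> a) * K b a)) (at x0)) \<and>
           (\<forall>a\<in>Basis. \<forall>b\<in>Basis. K a b = K b a)" by (rule choice[THEN exE]) 
  then obtain KA where AC0: "\<forall>A. \<rho>A A > 0 \<and> (\<forall>x\<in>ball x0 (\<rho>A A). ((\<lambda>x. u x $ A) has_derivative (\<lambda>v. \<Sum>b\<in>Basis. (v \<bullet> b) * QA A b x)) (at x)) \<and>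
           (\<forall>b\<in>Basis. (QA A b has_derivative (\<lambda>v. \<Sum>a\<in>Basis. (v \<bullet> a) * KA A b a)) (at x0)) \<and>
           (\<forall>a\<in>Basis. \<forall>b\<in>Basis. KA A a b = KA A b a)" by (rule choice[THEN exE]) 
  have AC: "\<And>A. \<rho>A A > 0"
    "\<And>A x. x \<in> ball x0 (\<rho>A A) \<Longrightarrow> ((\<lambda>x. u x $ A) has_derivative (\<lambda>v. \<Sum>b\<in>Basis. (v \<bullet> b) * QA A b x)) (at x)"
    "\<And>A b. b \<in> Basis \<Longrightarrow> (QA A b has_derivative (\<lambda>v. \<Sum>a\<in>Basis. (v \<bullet> a) * KA A b a)) (at x0)"
    "\<And>A a b. a \<in> Basis \<Longrightarrow> b \<in> Basis \<Longrightarrow> KA A a b = KA A b a"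
    using AC0 by blast+
  define \<rho> where "\<rho> = Min (range \<rho>A)"
  have \<rho>: "\<rho> > 0" unfolding \<rho>_def using AC(1) by simp
  have \<rho>le: "\<rho> \<le> \<rho>A A" for A unfolding \<rho>_def by simp
  define Qv where "Qv x = (\<chi> A i. QA A (axis i 1) x)" for x
  define Du where "Du v = (\<chi> A. \<Sum>b\<in>Basis. (v \<bullet> b) * QA A b x0)" for v
  define DP where "DP v = (\<chi> A i. \<Sum>a\<in>Basis. (v \<bullet> a) * KA A (axis i 1) a)" for v :: "real^('k+'a)"
  define Dj where "Dj v = (v, Du v, DP v)" for v
  have uder: "(u has_derivative (\<lambda>v. \<chi> A. \<Sum>b\<in>Basis. (v \<bullet> b) * QA A b x)) (at x)" if x: "x \<in> ball x0 \<rho>" for x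
  proof (rule vec_deriv)
    fix A
    have "x \<in> ball x0 (\<rho>A A)" using x \<rho>le[of A] by auto
    then show "((\<lambda>x. u x $ A) has_derivative (\<lambda>v. (\<chi> A. \<Sum>b\<in>Basis. (v \<bullet> b) * QA A b x) $ A)) (at x)"
      using AC(2) by simp
  qed
  have ax: "axis i (1::real) \<in> Basis" for i :: "'k + 'a" by simp
  have fd: "frechet_derivative u (at x) (axis i 1) $ A = QA A (axis i 1) x" if x: "x \<in> ball x0 \<rho>" for x i A
  proof -
    have "frechet_derivative u (at x) = (\<lambda>v. \<chi> A. \<Sum>b\<in>Basis. (v \<bullet> b) * QA A b x)"
      using frechet_derivative_at[OF uder[OF x]] by simp
    then show ?thesis using sum_Basis_delta[OF ax[of i]] by simp
  qed
  have jeq: "jet u x = (x, u x, Qv x)" if "x \<in> ball x0 \<rho>" for x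
    unfolding jet_def Qv_def using fd[OF that] by (simp add: vec_eq_iff)
  have Qder: "(Qv has_derivative DP) (at x0)"
  proof (rule vec_deriv)
    fix A
    show "((\<lambda>x. Qv x $ A) has_derivative (\<lambda>v. DP v $ A)) (at x0)"
    proof (rule vec_deriv)
      fix i
      show "((\<lambda>x. Qv x $ A $ i) has_derivative (\<lambda>v. DP v $ A $ i)) (at x0)"
        unfolding Qv_def DP_def using AC(3)[OF ax[of i]] by simp
    qed
  qed
  have x0b: "x0 \<in> ball x0 \<rho>" using \<rho> by simp
  have Jder: "((\<lambda>x. (x, u x, Qv x)) has_derivative Dj) (at x0)"
    unfolding Dj_def[abs_def] Du_def[abs_def]
    by (intro has_derivative_Pair has_derivative_ident uder[OF x0b] Qder)
  have jder: "(jet u has_derivative Dj) (at x0)"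
    by (rule has_derivative_transform_within_open[OF Jder open_ball x0b]) (use jeq in auto)
  have TJ: "tangent_jet u x0 = range Dj"
    unfolding tangent_jet_def using frechet_derivative_at[OF jder] by simp
  have linDj: "linear Dj" by (rule has_derivative_linear[OF jder])
  have z0eq: "z0 = (x0, u x0, Qv x0)" using assms(5) jeq[OF x0b] by simp
  have q0U: "(x0, u x0, restrP (Qv x0)) \<in> U" using assms(3) z0eq by (simp add: Utilde_def)
  have G: "\<psi> z0 vs = 0" if g: "(q, \<psi>) \<in> EDS_gens F" and l: "length vs = q" and s: "set vs \<subseteq> range Dj" for q \<psi> vs
  proof -
    from g consider (f0) A \<alpha> where "q = 0" "\<psi> = (\<lambda>z vs. fgen F A \<alpha> z)"
      | (df) A \<alpha> where "q = 1" "\<psi> = (\<lambda>z vs. frechet_derivative (fgen F A \<alpha>) (at z) (hd vs))"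
      | (eta) A where "q = 1" "\<psi> = (\<lambda>z vs. fst (snd (hd vs)) $ A - (\<Sum>i\<in>UNIV. snd (snd z) $ A $ i * fst (hd vs) $ i))"
      | (two) A where "q = 2" "\<psi> = (\<lambda>z vs. (\<Sum>i\<in>UNIV. snd (snd (vs ! 0)) $ A $ i * fst (vs ! 1) $ i
                          - snd (snd (vs ! 1)) $ A $ i * fst (vs ! 0) $ i))"
    proof -
      have "(\<exists>A \<alpha>. q = 0 \<and> \<psi> = (\<lambda>z vs. fgen F A \<alpha> z))
        \<or> (\<exists>A \<alpha>. q = 1 \<and> \<psi> = (\<lambda>z vs. frechet_derivative (fgen F A \<alpha>) (at z) (hd vs)))
        \<or> (\<exists>A. q = 1 \<and> \<psi> = (\<lambda>z vs. fst (snd (hd vs)) $ A - (\<Sum>i\<in>UNIV. snd (snd z) $ A $ i * fst (hd vs) $ i)))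
        \<or> (\<exists>A. q = 2 \<and> \<psi> = (\<lambda>z vs. (\<Sum>i\<in>UNIV. snd (snd (vs ! 0)) $ A $ i * fst (vs ! 1) $ i
                          - snd (snd (vs ! 1)) $ A $ i * fst (vs ! 0) $ i)))"
        using g unfolding EDS_gens_def Un_iff mem_Collect_eq Pair_inject by blast
      then show ?thesis using that by blast
    qed
    then show ?thesis
    proof cases
      case (f0 A \<alpha>)
      have "\<bar>fgen F A \<alpha> z0\<bar> \<le> C * (\<Sum>i\<in>UNIV. \<bar>x0 $ i - x0 $ i\<bar> ^ 2)"
        using ap[of x0 A \<alpha>] \<delta> unfolding fgen_def assms(5)[symmetric] by (simp add: jet_def)
      then show ?thesis using f0 by simp
    next
      case (df A \<alpha>)
      have "vs \<noteq> []" using l df by auto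
      then have "hd vs \<in> range Dj" using s hd_in_set by blast
      then obtain w where w: "hd vs = Dj w" by blast
      obtain \<rho>F QF KF where "\<rho>F > 0"
        and FD: "\<forall>x\<in>ball (x0, u x0, restrP (Qv x0)) \<rho>F. (F A \<alpha> has_derivative (\<lambda>v. \<Sum>b\<in>Basis. (v \<bullet> b) * QF b x)) (at x)"
        using analytic_C2[OF assms(2)[rule_format, of A \<alpha>] q0U] by blast
      have "(F A \<alpha> has_derivative (\<lambda>v. \<Sum>b\<in>Basis. (v \<bullet> b) * QF b (x0, u x0, restrP (Qv x0)))) (at (fst z0, fst (snd z0), restrP (snd (snd z0))))"
        using FD \<open>\<rho>F > 0\<close> z0eq by simp
      from fgen_deriv[where z=z0 and F=F and A=A and \<alpha>=\<alpha>, OF this] obtain Lf where Lf: "(fgen F A \<alpha> has_derivative Lf) (at z0)" by blast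
      have c1: "((fgen F A \<alpha>) \<circ> jet u has_derivative Lf \<circ> Dj) (at x0)"
        by (rule diff_chain_at[OF jder]) (use Lf assms(5) in simp)
      have c2: "((fgen F A \<alpha>) \<circ> jet u has_derivative (\<lambda>_. 0)) (at x0)"
      proof (rule small_deriv[OF \<delta>])
        fix x assume x: "x \<in> ball x0 \<delta>"
        have "\<bar>((fgen F A \<alpha>) \<circ> jet u) x\<bar> \<le> C * (\<Sum>i\<in>UNIV. \<bar>x $ i - x0 $ i\<bar> ^ 2)"
          using ap[OF x, of A \<alpha>] by (simp add: fgen_def jet_def)
        also have "\<dots> = C * norm (x - x0) ^ 2" by (simp add: norm_sq_vec)
        finally show "\<bar>((fgen F A \<alpha>) \<circ> jet u) x\<bar> \<le> C * norm (x - x0) ^ 2" .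
      qed
      have "Lf \<circ> Dj = (\<lambda>_. 0)" by (rule has_derivative_unique[OF c1 c2])
      then have "Lf (Dj w) = 0" by (metis comp_apply)
      moreover have "frechet_derivative (fgen F A \<alpha>) (at z0) = Lf" using frechet_derivative_at[OF Lf] by simp
      ultimately show ?thesis using df w by simp
    next
      case (eta A)
      have "vs \<noteq> []" using l eta by auto
      then have "hd vs \<in> range Dj" using s hd_in_set by blast
      then obtain w where w: "hd vs = Dj w" by blast
      have "(\<Sum>b\<in>Basis. (w \<bullet> b) * QA A b x0) = (\<Sum>i\<in>UNIV. (w \<bullet> axis i 1) * QA A (axis i 1) x0)"
        by (rule sum_Basis_vec)
      also have "\<dots> = (\<Sum>i\<in>UNIV. Qv x0 $ A $ i * w $ i)"
        by (simp add: inner_axis1 Qv_def mult.commute)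
      finally show ?thesis using eta w z0eq by (simp add: Dj_def Du_def)
    next
      case (two A)
      have "vs ! 0 \<in> set vs" "vs ! 1 \<in> set vs" using l two by auto
      then obtain w0 w1 where w: "vs ! 0 = Dj w0" "vs ! 1 = Dj w1" using s by blast
      let ?K = "KA A"
      have "(\<Sum>i\<in>UNIV. DP w0 $ A $ i * w1 $ i - DP w1 $ A $ i * w0 $ i)
          = (\<Sum>b\<in>Basis. (\<Sum>a\<in>Basis. (w0 \<bullet> a) * ?K b a) * (w1 \<bullet> b) - (\<Sum>a\<in>Basis. (w1 \<bullet> a) * ?K b a) * (w0 \<bullet> b))"
        by (simp add: sum_Basis_vec[of "\<lambda>b. (\<Sum>a\<in>Basis. (w0 \<bullet> a) * ?K b a) * (w1 \<bullet> b) - (\<Sum>a\<in>Basis. (w1 \<bullet> a) * ?K b a) * (w0 \<bullet> b)"]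
             inner_axis1 DP_def)
      also have "\<dots> = (\<Sum>b\<in>Basis. \<Sum>a\<in>Basis. (w0 \<bullet> a) * (w1 \<bullet> b) * ?K b a) - (\<Sum>b\<in>Basis. \<Sum>a\<in>Basis. (w1 \<bullet> a) * (w0 \<bullet> b) * ?K b a)"
        by (simp add: sum_subtractf sum_distrib_left sum_distrib_right mult_ac)
      also have "(\<Sum>b\<in>Basis. \<Sum>a\<in>Basis. (w1 \<bullet> a) * (w0 \<bullet> b) * ?K b a) = (\<Sum>a\<in>Basis. \<Sum>b\<in>Basis. (w1 \<bullet> a) * (w0 \<bullet> b) * ?K b a)"
        by (rule sum.swap)
      also have "\<dots> = (\<Sum>b\<in>Basis. \<Sum>a\<in>Basis. (w0 \<bullet> a) * (w1 \<bullet> b) * ?K b a)"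
        by (intro sum.cong refl) (simp add: AC(4) mult_ac)
      finally have "(\<Sum>i\<in>UNIV. DP w0 $ A $ i * w1 $ i - DP w1 $ A $ i * w0 $ i) = 0" by simp
      then show ?thesis using two w by (simp add: Dj_def)
    qed
  qed
  have int: "integral_element (EDS F) z0 (range Dj)"
    unfolding integral_element_def
  proof (intro conjI allI impI)
    show "subspace (range Dj)" using linear_subspace_image[OF linDj subspace_UNIV] by simp
    fix p \<phi> vs assume "(p, \<phi>) \<in> EDS F" and "length vs = p \<and> set vs \<subseteq> range Dj"
    then show "\<phi> z0 vs = 0"
      using ideal_vanish[of p \<phi> "EDS_gens F" "range Dj" z0 vs] G unfolding EDS_def by blast
  qed
  show ?thesis unfolding TJ
  proof (intro conjI allI impI int subsetI)
    fix E es v assume H: "subspace E \<and> E \<subseteq> range Dj \<and> distinct es \<and> independent (set es) \<and> span (set es) = E"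
      and v: "v \<in> range Dj"
    have "set es \<subseteq> range Dj" using H span_superset by blast
    then have sv: "set (v # es) \<subseteq> range Dj" using v by simp
    show "v \<in> Hpolar (EDS F) z0 es"
      unfolding Hpolar_def
    proof (intro CollectI allI impI)
      fix \<phi> assume "(Suc (length es), \<phi>) \<in> EDS F"
      then show "\<phi> z0 (v # es) = 0" using int sv unfolding integral_element_def by auto
    qed
  qed
qed

end
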